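(* (Explicit Rayleigh's Cutting Law.) Let $\Gamma$ be a metrized graph and let $e_i$ be an edge of $\Gamma$ with end points $p_i,q_i$ and length $L_i$. If $e_i$ is not a bridge of $\Gamma$, then for any $s,t\in\Gamma-e_i$, $$r(s,t)=r_{\Gamma-e_i}(s,t)-\frac{1}{L_i+R_i}\big(j^{\Gamma-e_i}_{p_i}(q_i,s)-j^{\Gamma-e_i}_{p_i}(q_i,t)\big)^2=r_{\Gamma-e_i}(s,t)-\frac{L_i+R_i}{L_i^2}\big(j_{p_i}(q_i,s)-j_{p_i}(q_i,t)\big)^2.$$ In particular $r_{\Gamma-e_i}(s,t)\ge r(s,t)$, and equality holds if and only if $j_{p_i}(q_i,s)=j_{p_i}(q_i,t)$.
   Context: A metrized graph $\Gamma$ is a finite connected graph (multiple edges and self-loops allowed) in which each edge is identified with a closed line segment of positive length. $\Gamma$ is regarded as a resistive electric circuit in which each edge is a resistor whose resistance equals its length. $r(x,y)$ is the effective resistance between $x$ and $y$; $j_z(x,y)$ is the voltage at $x$ when a unit current enters at $y$ and exits at $z$, with reference voltage $0$ at $z$. $\Gamma-e_i$ denotes the metrized graph obtained from $\Gamma$ by deleting the interior of the edge $e_i$; $e_i$ is a bridge if $\Gamma-e_i$ is disconnected. When $e_i$ is not a bridge, $R_i:=r_{\Gamma-e_i}(p_i,q_i)$. Subscripts/superscripts $\Gamma-e_i$ indicate resistance and voltage functions on $\Gamma-e_i$. *)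

theory Defs
  imports Complex_Main
begin

text \<open>A metrized graph: finite vertex set, finite edge set, each edge with two
  end points (possibly equal: self-loop) and a positive length.  Multiple edges allowed.\<close>

record ('v, 'e) mgraph =
  verts :: "'v set"
  edges :: "'e set"
  ends  :: "'e \<Rightarrow> 'v \<times> 'v"
  len   :: "'e \<Rightarrow> real"

text \<open>Points of a metrized graph: a vertex, or an interior point of an edge e at
  distance t (0 < t < length) from the first end point of e.\<close>

datatype ('v, 'e) point = Vert 'v | Inner 'e real

definition edge_pt :: "('v, 'e, 'z) mgraph_scheme \<Rightarrow> 'e \<Rightarrow> real \<Rightarrow> ('v, 'e) point" where
  "edge_pt G e t =
     (if t \<le> 0 then Vert (fst (ends G e))
      else if len G e \<le> t then Vert (snd (ends G e))
      else Inner e t)"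

definition pts :: "('v, 'e, 'z) mgraph_scheme \<Rightarrow> ('v, 'e) point set" where
  "pts G = Vert ` verts G \<union> {Inner e t | e t. e \<in> edges G \<and> 0 < t \<and> t < len G e}"

definition adj :: "('v, 'e, 'z) mgraph_scheme \<Rightarrow> ('v \<times> 'v) set" where
  "adj G = {ends G e | e. e \<in> edges G} \<union> {prod.swap (ends G e) | e. e \<in> edges G}"

definition connected_mg :: "('v, 'e, 'z) mgraph_scheme \<Rightarrow> bool" where
  "connected_mg G \<longleftrightarrow> (\<forall>u\<in>verts G. \<forall>v\<in>verts G. (u, v) \<in> (adj G)\<^sup>*)"

definition metrized_graph :: "('v, 'e, 'z) mgraph_scheme \<Rightarrow> bool" where
  "metrized_graph G \<longleftrightarrow>
     finite (verts G) \<and> verts G \<noteq> {} \<and> finite (edges G) \<and>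
     (\<forall>e\<in>edges G. fst (ends G e) \<in> verts G \<and> snd (ends G e) \<in> verts G \<and> 0 < len G e) \<and>
     connected_mg G"

definition delete_edge :: "('v, 'e, 'z) mgraph_scheme \<Rightarrow> 'e \<Rightarrow> ('v, 'e, 'z) mgraph_scheme" where
  "delete_edge G e = G\<lparr>edges := edges G - {e}\<rparr>"

definition is_bridge :: "('v, 'e, 'z) mgraph_scheme \<Rightarrow> 'e \<Rightarrow> bool" where
  "is_bridge G e \<longleftrightarrow> e \<in> edges G \<and> \<not> connected_mg (delete_edge G e)"

text \<open>f is affine along every edge on every closed parameter interval containing no
  point of B in its interior (so piecewise linear with break points only at B and vertices).\<close>

definition pl_adapted :: "('v, 'e, 'z) mgraph_scheme \<Rightarrow> ('v, 'e) point set \<Rightarrow> (('v, 'e) point \<Rightarrow> real) \<Rightarrow> bool" where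
  "pl_adapted G B f \<longleftrightarrow>
     (\<forall>e\<in>edges G. \<forall>a b. 0 \<le> a \<and> a < b \<and> b \<le> len G e \<and>
        (\<forall>t. a < t \<and> t < b \<longrightarrow> edge_pt G e t \<notin> B) \<longrightarrow>
        (\<exists>\<alpha> \<beta>. \<forall>t\<in>{a..b}. f (edge_pt G e t) = \<alpha> + \<beta> * t))"

definition right_slope :: "(real \<Rightarrow> real) \<Rightarrow> real \<Rightarrow> real" where
  "right_slope g t = (THE d. (g has_real_derivative d) (at_right t))"

definition left_slope :: "(real \<Rightarrow> real) \<Rightarrow> real \<Rightarrow> real" where
  "left_slope g t = (THE d. (g has_real_derivative d) (at_left t))"

text \<open>Sum of the outgoing directional derivatives of f at the point p
  (= minus the net current flowing out of p into the edges, resistance = length).\<close>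

definition flux :: "('v, 'e, 'z) mgraph_scheme \<Rightarrow> (('v, 'e) point \<Rightarrow> real) \<Rightarrow> ('v, 'e) point \<Rightarrow> real" where
  "flux G f p =
     (\<Sum>e\<in>edges G. \<Sum>t\<in>{t\<in>{0..len G e}. edge_pt G e t = p}.
        (if t < len G e then right_slope (\<lambda>u. f (edge_pt G e u)) t else 0)
      - (if 0 < t then left_slope (\<lambda>u. f (edge_pt G e u)) t else 0))"

text \<open>f is the voltage when unit current enters at y and exits at z, with f z = 0
  (continuous, piecewise linear, Kirchhoff's current law everywhere).\<close>

definition voltage_sol :: "('v, 'e, 'z) mgraph_scheme \<Rightarrow> ('v, 'e) point \<Rightarrow> ('v, 'e) point \<Rightarrow> (('v, 'e) point \<Rightarrow> real) \<Rightarrow> bool" where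
  "voltage_sol G y z f \<longleftrightarrow>
     pl_adapted G {y, z} f \<and>
     (\<forall>p\<in>pts G. flux G f p = (if p = z then 1 else 0) - (if p = y then 1 else 0)) \<and>
     f z = 0 \<and> (\<forall>p. p \<notin> pts G \<longrightarrow> f p = 0)"

text \<open>jv G z x y = j_z(x,y): voltage at x, unit current enters at y, exits at z, voltage 0 at z.\<close>

definition jv :: "('v, 'e, 'z) mgraph_scheme \<Rightarrow> ('v, 'e) point \<Rightarrow> ('v, 'e) point \<Rightarrow> ('v, 'e) point \<Rightarrow> real" where
  "jv G z x y = (THE f. voltage_sol G y z f) x"

definition res :: "('v, 'e, 'z) mgraph_scheme \<Rightarrow> ('v, 'e) point \<Rightarrow> ('v, 'e) point \<Rightarrow> real" where
  "res G x y = jv G y x x"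

end

theory Submission
  imports Defs "Jordan_Normal_Form.Determinant"
begin


lemma mat_inj_surj:
  fixes M :: "real mat"
  assumes M: "M \<in> carrier_mat k k"
    and inj: "\<And>x. x \<in> carrier_vec k \<Longrightarrow> M *\<^sub>v x = 0\<^sub>v k \<Longrightarrow> x = 0\<^sub>v k"
    and b: "b \<in> carrier_vec k"
  shows "\<exists>x \<in> carrier_vec k. M *\<^sub>v x = b"
proof -
  have "det M \<noteq> 0" using det_0_iff_vec_prod_zero[OF M] inj by blast
  from det_non_zero_imp_unit[OF M this, of undefined]
  obtain B where B: "B \<in> carrier_mat k k" "M * B = 1\<^sub>m k"
    unfolding Units_def ring_mat_def by auto
  show ?thesis
  proof (intro bexI)
    show "M *\<^sub>v (B *\<^sub>v b) = b" using B M b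
      by (metis assoc_mult_mat_vec one_mult_mat_vec)
    show "B *\<^sub>v b \<in> carrier_vec k" using B b by auto
  qed
qed

lemma fin_inj_surj:
  fixes A :: "'p \<Rightarrow> 'p \<Rightarrow> real"
  assumes fin: "finite N"
    and inj: "\<And>v. (\<forall>n\<in>N. (\<Sum>m\<in>N. A n m * v m) = 0) \<Longrightarrow> (\<forall>m\<in>N. v m = 0)"
  shows "\<exists>v. \<forall>n\<in>N. (\<Sum>m\<in>N. A n m * v m) = b n"
proof -
  define k where "k = card N"
  obtain h where h: "bij_betw h {0..<k} N" using ex_bij_betw_nat_finite[OF fin] k_def by blast
  define g where "g = inv_into {0..<k} h"
  have gh: "\<And>j. j < k \<Longrightarrow> g (h j) = j" unfolding g_def using h
    by (simp add: bij_betw_def inv_into_f_f)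
  have hg: "\<And>m. m \<in> N \<Longrightarrow> h (g m) = m \<and> g m < k" unfolding g_def using h
    by (metis atLeastLessThan_iff bij_betw_def bij_betw_inv_into_right inv_into_into)
  define M where "M = mat k k (\<lambda>(i,j). A (h i) (h j))"
  have M: "M \<in> carrier_mat k k" unfolding M_def by simp
  have key: "(M *\<^sub>v x) $ i = (\<Sum>m\<in>N. A (h i) m * x $ (g m))" if "i < k" "x \<in> carrier_vec k" for x i
  proof -
    have "(M *\<^sub>v x) $ i = (\<Sum>j\<in>{0..<k}. A (h i) (h j) * x $ j)"
      using that unfolding M_def by (simp add: mult_mat_vec_def scalar_prod_def)
    also have "\<dots> = (\<Sum>j\<in>{0..<k}. A (h i) (h j) * x $ (g (h j)))"
      by (intro sum.cong) (auto simp: gh)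
    also have "\<dots> = (\<Sum>m\<in>N. A (h i) m * x $ (g m))"
      using sum.reindex_bij_betw[OF h, of "\<lambda>m. A (h i) m * x $ (g m)"] by simp
    finally show ?thesis .
  qed
  have "\<exists>x \<in> carrier_vec k. M *\<^sub>v x = vec k (\<lambda>i. b (h i))"
  proof (rule mat_inj_surj[OF M])
    fix x :: "real vec" assume x: "x \<in> carrier_vec k" and Mx: "M *\<^sub>v x = 0\<^sub>v k"
    have "\<forall>n\<in>N. (\<Sum>m\<in>N. A n m * x $ (g m)) = 0"
    proof
      fix n assume "n \<in> N"
      then have "(M *\<^sub>v x) $ (g n) = 0" using Mx hg by simp
      then show "(\<Sum>m\<in>N. A n m * x $ (g m)) = 0" using key[OF _ x, of "g n"] hg \<open>n \<in> N\<close> by simp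
    qed
    from inj[OF this] have "\<forall>m\<in>N. x $ (g m) = 0" .
    then have "\<forall>j<k. x $ j = 0" using h gh unfolding bij_betw_def by (metis atLeastLessThan_iff image_eqI lessThan_atLeast0 lessThan_iff)
    then show "x = 0\<^sub>v k" using x by (intro eq_vecI) auto
  qed simp
  then obtain x where x: "x \<in> carrier_vec k" "M *\<^sub>v x = vec k (\<lambda>i. b (h i))" by blast
  show ?thesis
  proof (intro exI ballI)
    fix n assume "n \<in> N"
    have "(M *\<^sub>v x) $ (g n) = b n" using x hg[OF \<open>n \<in> N\<close>] by simp
    then show "(\<Sum>m\<in>N. A n m * x $ (g m)) = b n" using key[OF _ x(1), of "g n"] hg[OF \<open>n \<in> N\<close>] by simp
  qed
qed



definition nx :: "real set \<Rightarrow> real \<Rightarrow> real" where "nx S a = Min {c\<in>S. a < c}"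
definition sst :: "real set \<Rightarrow> real \<Rightarrow> real \<Rightarrow> real" where "sst S L u = Max {c\<in>S. c \<le> u \<and> c < L}"

lemma nx_props:
  assumes "finite S" "L \<in> S" "a < L"
  shows "nx S a \<in> S" "a < nx S a" "\<And>c. c \<in> S \<Longrightarrow> a < c \<Longrightarrow> nx S a \<le> c"
proof -
  have ne: "{c\<in>S. a < c} \<noteq> {}" using assms by auto
  have fin: "finite {c\<in>S. a < c}" using assms by auto
  show "nx S a \<in> S" "a < nx S a" using Min_in[OF fin ne] unfolding nx_def by auto
  show "\<And>c. c \<in> S \<Longrightarrow> a < c \<Longrightarrow> nx S a \<le> c" unfolding nx_def using fin by auto
qed

lemma nx_le:
  assumes "finite S" "L \<in> S" "a < L" "S \<subseteq> {0..L}"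
  shows "nx S a \<le> L"
  using nx_props[OF assms(1-3)] assms by blast

lemma nx_inj:
  assumes "finite S" "L \<in> S"
  shows "inj_on (nx S) {a\<in>S. a < L}"
proof (rule inj_onI)
  fix a b assume a: "a \<in> {a\<in>S. a < L}" and b: "b \<in> {a\<in>S. a < L}" and e: "nx S a = nx S b"
  show "a = b"
  proof (rule ccontr)
    assume "a \<noteq> b"
    then consider "a < b" | "b < a" by linarith
    then show False
    proof cases
      case 1
      then have "nx S a \<le> b" using nx_props(3)[OF assms, of a b] a b by auto
      moreover have "b < nx S b" using nx_props(2)[OF assms, of b] b by auto
      ultimately show False using e by simp
    next
      case 2
      then have "nx S b \<le> a" using nx_props(3)[OF assms, of b a] a b by auto
      moreover have "a < nx S a" using nx_props(2)[OF assms, of a] a by auto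
      ultimately show False using e by simp
    qed
  qed
qed

lemma nx_surj:
  assumes "finite S" "L \<in> S" "0 \<in> S" "S \<subseteq> {0..L}" "b \<in> S" "0 < b"
  shows "\<exists>a\<in>S. a < L \<and> nx S a = b"
proof -
  define a where "a = Max {c\<in>S. c < b}"
  have ne: "{c\<in>S. c < b} \<noteq> {}" using assms by auto
  have fin: "finite {c\<in>S. c < b}" using assms by auto
  have a: "a \<in> S" "a < b" using Min_in[OF fin ne] Max_in[OF fin ne] unfolding a_def by auto
  have amax: "\<And>c. c \<in> S \<Longrightarrow> c < b \<Longrightarrow> c \<le> a" unfolding a_def using fin by auto
  have "b \<le> L" using assms by auto
  then have aL: "a < L" using a by simp
  have "nx S a \<le> b" using nx_props(3)[OF assms(1,2) aL] a assms by auto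
  moreover have "\<not> nx S a < b" using amax nx_props[OF assms(1,2) aL] by force
  ultimately show ?thesis using a aL by (intro bexI[of _ a]) auto
qed

lemma sst_props:
  assumes "finite S" "0 \<in> S" "L \<in> S" "0 < L" "S \<subseteq> {0..L}" "0 \<le> u" "u \<le> L"
  shows "sst S L u \<in> S" "sst S L u < L" "sst S L u \<le> u" "u \<le> nx S (sst S L u)"
    "\<And>c. c \<in> S \<Longrightarrow> c \<le> u \<Longrightarrow> c < L \<Longrightarrow> c \<le> sst S L u"
proof -
  have ne: "{c\<in>S. c \<le> u \<and> c < L} \<noteq> {}" using assms by auto
  have fin: "finite {c\<in>S. c \<le> u \<and> c < L}" using assms by auto
  show a: "sst S L u \<in> S" "sst S L u < L" "sst S L u \<le> u" using Max_in[OF fin ne] unfolding sst_def by auto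
  show amax: "\<And>c. c \<in> S \<Longrightarrow> c \<le> u \<Longrightarrow> c < L \<Longrightarrow> c \<le> sst S L u" unfolding sst_def using fin by auto
  show "u \<le> nx S (sst S L u)"
  proof (rule ccontr)
    assume "\<not> ?thesis"
    then have "nx S (sst S L u) < u" by simp
    moreover have "nx S (sst S L u) \<in> S" "sst S L u < nx S (sst S L u)" using nx_props[OF assms(1,3) a(2)] by auto
    ultimately show False using amax[of "nx S (sst S L u)"] assms by force
  qed
qed

lemma sst_eq:
  assumes "finite S" "0 \<in> S" "L \<in> S" "0 < L" "S \<subseteq> {0..L}" "a \<in> S" "a < L" "a \<le> u" "u < nx S a"
  shows "sst S L u = a"
proof -
  have u: "0 \<le> u" "u \<le> L" using assms nx_le[OF assms(1,3,7,5)] by auto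
  note P = sst_props[OF assms(1-5) u]
  have "a \<le> sst S L u" using P(5)[of a] assms by auto
  moreover have "\<not> a < sst S L u" using nx_props(3)[OF assms(1,3,7), of "sst S L u"] P assms by force
  ultimately show ?thesis by simp
qed

lemma nx_induct:
  assumes "finite S" "0 \<in> S" "L \<in> S" "S \<subseteq> {0..L}"
    and P0: "P 0" and step: "\<And>a. a \<in> S \<Longrightarrow> a < L \<Longrightarrow> P a \<Longrightarrow> P (nx S a)"
  shows "b \<in> S \<Longrightarrow> 0 \<le> b \<Longrightarrow> P b"
proof (induction "card {c\<in>S. c < b}" arbitrary: b rule: less_induct)
  case less
  show ?case
  proof (cases "b = 0")
    case True then show ?thesis using P0 by simp
  next
    case False
    then have "0 < b" using less by simp
    from nx_surj[OF assms(1,3,2,4) less.prems(1) this] obtain a where a: "a \<in> S" "a < L" "nx S a = b" by blast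
    have ab: "a < b" using nx_props(2)[OF assms(1,3) a(2)] a by simp
    have "{c\<in>S. c < a} \<subset> {c\<in>S. c < b}" using ab a by auto
    then have "card {c\<in>S. c < a} < card {c\<in>S. c < b}" using assms(1) by (intro psubset_card_mono) auto
    moreover have "0 \<le> a" using assms a by auto
    ultimately have "P a" using less a by blast
    then show ?thesis using step a by blast
  qed
qed



definition interior_pts :: "('v,'e,'z) mgraph_scheme \<Rightarrow> ('v,'e) point set" where
  "interior_pts G = {Inner e u | e u. e \<in> edges G \<and> 0 < u \<and> u < len G e}"
definition bp :: "('v,'e,'z) mgraph_scheme \<Rightarrow> ('v,'e) point set \<Rightarrow> 'e \<Rightarrow> real set" where
  "bp G X e = insert 0 (insert (len G e) {u. Inner e u \<in> X})"
definition nodes :: "('v,'e,'z) mgraph_scheme \<Rightarrow> ('v,'e) point set \<Rightarrow> ('v,'e) point set" where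
  "nodes G X = Vert ` verts G \<union> X"
definition ind :: "bool \<Rightarrow> real" where "ind b = (if b then 1 else 0)"
definition segs :: "('v,'e,'z) mgraph_scheme \<Rightarrow> ('v,'e) point set \<Rightarrow> 'e \<Rightarrow> real set" where
  "segs G X e = {a\<in>bp G X e. a < len G e}"
definition sl :: "('v,'e,'z) mgraph_scheme \<Rightarrow> ('v,'e) point set \<Rightarrow> (('v,'e) point \<Rightarrow> real) \<Rightarrow> 'e \<Rightarrow> real \<Rightarrow> real" where
  "sl G X f e a = (f (edge_pt G e (nx (bp G X e) a)) - f (edge_pt G e a)) / (nx (bp G X e) a - a)"
definition Lap :: "('v,'e,'z) mgraph_scheme \<Rightarrow> ('v,'e) point set \<Rightarrow> (('v,'e) point \<Rightarrow> real) \<Rightarrow> ('v,'e) point \<Rightarrow> real" where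
  "Lap G X f n = (\<Sum>e\<in>edges G. \<Sum>a\<in>segs G X e.
      (ind (edge_pt G e a = n) - ind (edge_pt G e (nx (bp G X e) a) = n)) * sl G X f e a)"
definition wfg :: "('v,'e,'z) mgraph_scheme \<Rightarrow> ('v,'e) point set \<Rightarrow> bool" where
  "wfg G X \<longleftrightarrow> metrized_graph G \<and> finite X \<and> X \<subseteq> interior_pts G"

lemma wf_basic:
  assumes "wfg G X"
  shows "finite (verts G)" "finite (edges G)" "finite X" "finite (nodes G X)"
    "\<And>e. e \<in> edges G \<Longrightarrow> fst (ends G e) \<in> verts G \<and> snd (ends G e) \<in> verts G \<and> 0 < len G e"
    "connected_mg G"
  using assms unfolding wfg_def metrized_graph_def nodes_def by auto

lemma bp_props:
  assumes "wfg G X" "e \<in> edges G"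
  shows "finite (bp G X e)" "0 \<in> bp G X e" "len G e \<in> bp G X e" "0 < len G e"
    "bp G X e \<subseteq> {0..len G e}"
proof -
  have "finite (Inner e -` X)" using assms wf_basic(3) by (intro finite_vimageI) (auto simp: inj_def)
  moreover have "{u. Inner e u \<in> X} = Inner e -` X" by auto
  ultimately show "finite (bp G X e)" unfolding bp_def by simp
  show "0 \<in> bp G X e" "len G e \<in> bp G X e" unfolding bp_def by auto
  show L: "0 < len G e" using wf_basic(5)[OF assms(1,2)] by simp
  have H: "\<And>u. Inner e u \<in> X \<Longrightarrow> 0 < u \<and> u < len G e" using assms(1) unfolding wfg_def interior_pts_def by auto
  show "bp G X e \<subseteq> {0..len G e}"
  proof
    fix x assume "x \<in> bp G X e"
    then consider "x = 0" | "x = len G e" | "Inner e x \<in> X" unfolding bp_def by auto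
    then show "x \<in> {0..len G e}" using L H[of x] by cases auto
  qed
qed

lemma edge_pt_simps:
  assumes "0 < len G e"
  shows "edge_pt G e 0 = Vert (fst (ends G e))" "edge_pt G e (len G e) = Vert (snd (ends G e))"
    "0 < u \<Longrightarrow> u < len G e \<Longrightarrow> edge_pt G e u = Inner e u"
  using assms unfolding edge_pt_def by auto

lemma pt_bp_node:
  assumes "wfg G X" "e \<in> edges G" "a \<in> bp G X e"
  shows "edge_pt G e a \<in> nodes G X"
proof -
  note B = bp_props[OF assms(1,2)]
  have a: "a = 0 \<or> a = len G e \<or> Inner e a \<in> X" using assms(3) unfolding bp_def by auto
  have a2: "0 \<le> a" "a \<le> len G e" using B(5) assms(3) by auto
  show ?thesis
  proof (cases "a = 0 \<or> a = len G e")
    case True then show ?thesis using edge_pt_simps[OF B(4)] wf_basic(5)[OF assms(1,2)] unfolding nodes_def by auto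
  next
    case False
    then have "Inner e a \<in> X" using a by auto
    then show ?thesis using False a2 edge_pt_simps(3)[OF B(4), of a] unfolding nodes_def by auto
  qed
qed

lemma nodes_pts:
  assumes "wfg G X" shows "nodes G X \<subseteq> pts G"
  using assms unfolding wfg_def nodes_def pts_def interior_pts_def by auto

lemma seg_props:
  assumes "wfg G X" "e \<in> edges G" "a \<in> segs G X e"
  shows "a \<in> bp G X e" "a < len G e" "0 \<le> a" "nx (bp G X e) a \<in> bp G X e" "a < nx (bp G X e) a"
    "nx (bp G X e) a \<le> len G e"
    "\<And>c. c \<in> bp G X e \<Longrightarrow> a < c \<Longrightarrow> nx (bp G X e) a \<le> c"
  using assms(3) nx_props[OF bp_props(1,3)[OF assms(1,2)]] nx_le[OF bp_props(1,3)[OF assms(1,2)]]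
    bp_props(5)[OF assms(1,2)] unfolding segs_def by auto

lemma sum_ind:
  assumes "finite N" "a \<in> N"
  shows "(\<Sum>n\<in>N. w n * ind (a = n)) = w a"
proof -
  have "(\<Sum>n\<in>N. w n * ind (a = n)) = (\<Sum>n\<in>N. if a = n then w n else 0)"
    by (intro sum.cong) (auto simp: ind_def)
  also have "\<dots> = w a" using assms by simp
  finally show ?thesis .
qed

lemma sum_ind2:
  assumes "finite N" "a \<in> N"
  shows "(\<Sum>n\<in>N. ind (n = a) * w n) = w a"
  using sum_ind[OF assms, of w] by (simp add: mult.commute eq_commute)

lemma aux_alg: "((wa::real) - wb) * ((fb - fa) / d) = - ((fb - fa) * (wb - wa) / d)"
proof -
  have "(wa - wb) * (fb - fa) = - ((fb - fa) * (wb - wa))" by (simp add: algebra_simps)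
  then show ?thesis by (metis minus_divide_left times_divide_eq_right)
qed

definition energy :: "('v,'e,'z) mgraph_scheme \<Rightarrow> ('v,'e) point set \<Rightarrow> (('v,'e) point \<Rightarrow> real) \<Rightarrow> (('v,'e) point \<Rightarrow> real) \<Rightarrow> real" where
  "energy G X f w = (\<Sum>e\<in>edges G. \<Sum>a\<in>segs G X e.
      (f (edge_pt G e (nx (bp G X e) a)) - f (edge_pt G e a)) * (w (edge_pt G e (nx (bp G X e) a)) - w (edge_pt G e a))
      / (nx (bp G X e) a - a))"

lemma segs_fin: "wfg G X \<Longrightarrow> e \<in> edges G \<Longrightarrow> finite (segs G X e)"
  using bp_props(1)[of G X e] unfolding segs_def by auto

lemma green:
  assumes "wfg G X"
  shows "(\<Sum>n\<in>nodes G X. w n * Lap G X f n) = - energy G X f w"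
proof -
  let ?N = "nodes G X"
  have "(\<Sum>n\<in>?N. w n * Lap G X f n) = (\<Sum>n\<in>?N. \<Sum>e\<in>edges G. \<Sum>a\<in>segs G X e.
      w n * ((ind (edge_pt G e a = n) - ind (edge_pt G e (nx (bp G X e) a) = n)) * sl G X f e a))"
    unfolding Lap_def by (simp add: sum_distrib_left)
  also have "\<dots> = (\<Sum>e\<in>edges G. \<Sum>a\<in>segs G X e. \<Sum>n\<in>?N.
      w n * ((ind (edge_pt G e a = n) - ind (edge_pt G e (nx (bp G X e) a) = n)) * sl G X f e a))"
    by (subst sum.swap) (intro sum.cong refl, rule sum.swap)
  also have "\<dots> = (\<Sum>e\<in>edges G. \<Sum>a\<in>segs G X e. - ((f (edge_pt G e (nx (bp G X e) a)) - f (edge_pt G e a)) * (w (edge_pt G e (nx (bp G X e) a)) - w (edge_pt G e a))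
      / (nx (bp G X e) a - a)))"
  proof (intro sum.cong refl)
    fix e a assume e: "e \<in> edges G" and a: "a \<in> segs G X e"
    have n1: "edge_pt G e a \<in> ?N" "edge_pt G e (nx (bp G X e) a) \<in> ?N"
      using pt_bp_node[OF assms e] seg_props[OF assms e a] by auto
    have fin: "finite ?N" using wf_basic[OF assms] by simp
    have "(\<Sum>n\<in>?N. w n * ((ind (edge_pt G e a = n) - ind (edge_pt G e (nx (bp G X e) a) = n)) * sl G X f e a))
       = ((\<Sum>n\<in>?N. w n * ind (edge_pt G e a = n)) - (\<Sum>n\<in>?N. w n * ind (edge_pt G e (nx (bp G X e) a) = n))) * sl G X f e a"
      by (simp add: sum_subtractf[symmetric] sum_distrib_right right_diff_distrib left_diff_distrib mult.assoc)
    also have "\<dots> = (w (edge_pt G e a) - w (edge_pt G e (nx (bp G X e) a))) * sl G X f e a"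
      using sum_ind[OF fin n1(1)] sum_ind[OF fin n1(2)] by simp
    finally show "(\<Sum>n\<in>?N. w n * ((ind (edge_pt G e a = n) - ind (edge_pt G e (nx (bp G X e) a) = n)) * sl G X f e a))
      = - ((f (edge_pt G e (nx (bp G X e) a)) - f (edge_pt G e a)) * (w (edge_pt G e (nx (bp G X e) a)) - w (edge_pt G e a))
      / (nx (bp G X e) a - a))" unfolding sl_def by (simp only: aux_alg)
  qed
  also have "\<dots> = - energy G X f w" unfolding energy_def by (simp add: sum_negf)
  finally show ?thesis .
qed

lemma energy_sym: "energy G X f w = energy G X w f"
  unfolding energy_def by (intro sum.cong refl) (simp add: mult.commute)

lemma energy_nonneg:
  assumes "wfg G X" shows "0 \<le> energy G X f f"
  unfolding energy_def
proof (intro sum_nonneg)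
  fix e a assume e: "e \<in> edges G" and a: "a \<in> segs G X e"
  have "0 < nx (bp G X e) a - a" using seg_props[OF assms e a] by simp
  then show "0 \<le> (f (edge_pt G e (nx (bp G X e) a)) - f (edge_pt G e a)) * (f (edge_pt G e (nx (bp G X e) a)) - f (edge_pt G e a)) / (nx (bp G X e) a - a)"
    by simp
qed



lemma aux_lin: "((a::real) * f1 + b * g1 + c - (a * f0 + b * g0 + c)) / d = a * ((f1 - f0) / d) + b * ((g1 - g0) / d)"
proof -
  have "(a * f1 + b * g1 + c - (a * f0 + b * g0 + c)) = a * (f1 - f0) + b * (g1 - g0)" by (simp add: algebra_simps)
  then show ?thesis by (metis add_divide_distrib times_divide_eq_right)
qed

lemma sl_lin: "sl G X (\<lambda>x. a * f x + b * g x + c) e u = a * sl G X f e u + b * sl G X g e u"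
  unfolding sl_def by (rule aux_lin)

lemma Lap_lin: "Lap G X (\<lambda>x. a * f x + b * g x + c) n = a * Lap G X f n + b * Lap G X g n"
proof -
  have "Lap G X (\<lambda>x. a * f x + b * g x + c) n = (\<Sum>e\<in>edges G. \<Sum>u\<in>segs G X e.
      a * ((ind (edge_pt G e u = n) - ind (edge_pt G e (nx (bp G X e) u) = n)) * sl G X f e u)
    + b * ((ind (edge_pt G e u = n) - ind (edge_pt G e (nx (bp G X e) u) = n)) * sl G X g e u))"
    unfolding Lap_def sl_lin by (intro sum.cong refl) (simp add: algebra_simps)
  also have "\<dots> = a * Lap G X f n + b * Lap G X g n"
    unfolding Lap_def by (simp add: sum.distrib sum_distrib_left)
  finally show ?thesis .
qed

lemma sl_sum:
  assumes "finite M"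
  shows "sl G X (\<lambda>x. \<Sum>m\<in>M. c m * g m x) e u = (\<Sum>m\<in>M. c m * sl G X (g m) e u)"
  unfolding sl_def by (simp add: sum_subtractf[symmetric] sum_divide_distrib right_diff_distrib)

lemma Lap_sum:
  assumes "finite M"
  shows "Lap G X (\<lambda>x. \<Sum>m\<in>M. c m * g m x) n = (\<Sum>m\<in>M. c m * Lap G X (g m) n)"
proof -
  have "Lap G X (\<lambda>x. \<Sum>m\<in>M. c m * g m x) n = (\<Sum>e\<in>edges G. \<Sum>a\<in>segs G X e. \<Sum>m\<in>M.
      c m * ((ind (edge_pt G e a = n) - ind (edge_pt G e (nx (bp G X e) a) = n)) * sl G X (g m) e a))"
    unfolding Lap_def sl_sum[OF assms] by (intro sum.cong refl) (simp add: sum_distrib_left mult.left_commute)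
  also have "\<dots> = (\<Sum>m\<in>M. c m * Lap G X (g m) n)"
    unfolding Lap_def sum_distrib_left
    by (subst sum.swap) (intro sum.cong refl, rule sum.swap)
  finally show ?thesis .
qed

lemma Lap_cong:
  assumes "wfg G X" "\<And>x. x \<in> nodes G X \<Longrightarrow> f x = g x"
  shows "Lap G X f n = Lap G X g n"
  unfolding Lap_def
proof (intro sum.cong refl)
  fix e a assume e: "e \<in> edges G" and a: "a \<in> segs G X e"
  have "sl G X f e a = sl G X g e a" unfolding sl_def
    using assms(2) pt_bp_node[OF assms(1) e] seg_props[OF assms(1) e a] by simp
  then show "(ind (edge_pt G e a = n) - ind (edge_pt G e (nx (bp G X e) a) = n)) * sl G X f e a =
         (ind (edge_pt G e a = n) - ind (edge_pt G e (nx (bp G X e) a) = n)) * sl G X g e a" by simp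
qed

lemma Lap_matrix:
  assumes "wfg G X"
  shows "Lap G X f n = (\<Sum>m\<in>nodes G X. Lap G X (\<lambda>x. ind (x = m)) n * f m)"
proof -
  have fin: "finite (nodes G X)" using wf_basic[OF assms] by simp
  have "Lap G X f n = Lap G X (\<lambda>x. \<Sum>m\<in>nodes G X. f m * ind (x = m)) n"
    using sum_ind[OF fin, of _ f] by (intro Lap_cong[OF assms]) (simp add: eq_commute)
  also have "\<dots> = (\<Sum>m\<in>nodes G X. f m * Lap G X (\<lambda>x. ind (x = m)) n)"
    by (rule Lap_sum[OF fin])
  finally show ?thesis by (simp add: mult.commute)
qed

lemma Lap_total:
  assumes "wfg G X"
  shows "(\<Sum>n\<in>nodes G X. Lap G X f n) = 0"
proof -
  have "(\<Sum>n\<in>nodes G X. 1 * Lap G X f n) = - energy G X f (\<lambda>_. 1)" by (rule green[OF assms])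
  then show ?thesis unfolding energy_def by simp
qed

lemma adj_rtrancl_eq:
  assumes "\<And>u w. (u, w) \<in> adj G \<Longrightarrow> d (Vert u) = d (Vert w)"
  shows "(u, w) \<in> (adj G)\<^sup>* \<Longrightarrow> d (Vert u) = (d (Vert w) :: real)"
  by (induction rule: rtrancl_induct) (auto dest: assms)

lemma lap_kernel:
  assumes wf: "wfg G X" and L0: "\<And>n. n \<in> nodes G X \<Longrightarrow> Lap G X d n = 0"
    and z: "z \<in> nodes G X" "d z = 0"
  shows "\<And>n. n \<in> nodes G X \<Longrightarrow> d n = 0"
proof -
  have "(\<Sum>n\<in>nodes G X. d n * Lap G X d n) = 0" using L0 by simp
  then have E0: "energy G X d d = 0" using green[OF wf] by simp
  define T where "T e a = (d (edge_pt G e (nx (bp G X e) a)) - d (edge_pt G e a)) * (d (edge_pt G e (nx (bp G X e) a)) - d (edge_pt G e a))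
      / (nx (bp G X e) a - a)" for e a
  have nn: "0 \<le> T e a" if "e \<in> edges G" "a \<in> segs G X e" for e a
    using seg_props(5)[OF wf that] unfolding T_def by simp
  have E1: "(\<Sum>e\<in>edges G. \<Sum>a\<in>segs G X e. T e a) = 0" using E0 unfolding energy_def T_def .
  have E2: "(\<Sum>a\<in>segs G X e. T e a) = 0" if e: "e \<in> edges G" for e
  proof -
    have "((\<Sum>e\<in>edges G. \<Sum>a\<in>segs G X e. T e a) = 0) = (\<forall>e\<in>edges G. (\<Sum>a\<in>segs G X e. T e a) = 0)"
      by (rule sum_nonneg_eq_0_iff[OF wf_basic(2)[OF wf]]) (rule sum_nonneg, rule nn)
    then show ?thesis using E1 e by blast
  qed
  have seg0: "d (edge_pt G e (nx (bp G X e) a)) = d (edge_pt G e a)" if e: "e \<in> edges G" and a: "a \<in> segs G X e" for e a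
  proof -
    have "((\<Sum>a\<in>segs G X e. T e a) = 0) = (\<forall>a\<in>segs G X e. T e a = 0)"
      by (rule sum_nonneg_eq_0_iff[OF segs_fin[OF wf e]]) (rule nn[OF e])
    then have "T e a = 0" using E2[OF e] a by blast
    then show ?thesis using seg_props(5)[OF wf e a] unfolding T_def by simp
  qed
  have along: "d (edge_pt G e b) = d (edge_pt G e 0)" if e: "e \<in> edges G" and b: "b \<in> bp G X e" for e b
  proof -
    note B = bp_props[OF wf e]
    show ?thesis
    proof (rule nx_induct[OF B(1,2,3,5), where P = "\<lambda>b. d (edge_pt G e b) = d (edge_pt G e 0)"])
      fix a assume "a \<in> bp G X e" "a < len G e" "d (edge_pt G e a) = d (edge_pt G e 0)"
      then show "d (edge_pt G e (nx (bp G X e) a)) = d (edge_pt G e 0)"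
        using seg0[OF e, of a] unfolding segs_def by simp
    qed (use b B in auto)
  qed
  have edge_eq: "d (Vert (snd (ends G e))) = d (Vert (fst (ends G e)))" if e: "e \<in> edges G" for e
    using along[OF e bp_props(3)[OF wf e]] edge_pt_simps[OF bp_props(4)[OF wf e]] by simp
  have adj_eq: "d (Vert u) = d (Vert w)" if uw: "(u, w) \<in> adj G" for u w
  proof -
    obtain e where e: "e \<in> edges G" "(u, w) = ends G e \<or> (u, w) = prod.swap (ends G e)"
      using uw unfolding adj_def by blast
    obtain a b where ab: "ends G e = (a, b)" by (cases "ends G e")
    show ?thesis using e edge_eq[OF e(1)] ab by auto
  qed
  have conn: "d (Vert u) = d (Vert w)" if "u \<in> verts G" "w \<in> verts G" for u w
  proof -
    have "(u, w) \<in> (adj G)\<^sup>*" using wf_basic(6)[OF wf] that unfolding connected_mg_def by blast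
    then show ?thesis using adj_rtrancl_eq[of G d] adj_eq by blast
  qed
  have tov: "\<exists>u\<in>verts G. d n = d (Vert u)" if n: "n \<in> nodes G X" for n
  proof (cases "n \<in> X")
    case True
    then obtain e u where eu: "n = Inner e u" "e \<in> edges G" "0 < u" "u < len G e"
      using wf unfolding wfg_def interior_pts_def by auto
    have "u \<in> bp G X e" using True eu unfolding bp_def by auto
    then have "d n = d (Vert (fst (ends G e)))"
      using along[OF eu(2)] edge_pt_simps[OF bp_props(4)[OF wf eu(2)]] eu by metis
    then show ?thesis using wf_basic(5)[OF wf eu(2)] by blast
  next
    case False then show ?thesis using n unfolding nodes_def by auto
  qed
  fix n assume n: "n \<in> nodes G X"
  obtain u where u: "u \<in> verts G" "d n = d (Vert u)" using tov[OF n] by blast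
  obtain w where w: "w \<in> verts G" "d z = d (Vert w)" using tov[OF z(1)] by blast
  show "d n = 0" using u w conn z(2) by metis
qed



lemma lap_exists:
  assumes wf: "wfg G X" and y: "y \<in> nodes G X" and z: "z \<in> nodes G X"
  shows "\<exists>v. (\<forall>n\<in>nodes G X. Lap G X v n = ind (n = z) - ind (n = y)) \<and> v z = 0"
proof -
  let ?N = "nodes G X"
  let ?N' = "nodes G X - {z}"
  define A where "A n m = Lap G X (\<lambda>x. ind (x = m)) n" for n m
  have fin: "finite ?N" using wf_basic[OF wf] by simp
  have key: "Lap G X (v(z := 0)) n = (\<Sum>m\<in>?N'. A n m * v m)" for v n
  proof -
    have "Lap G X (v(z := 0)) n = (\<Sum>m\<in>?N. A n m * (v(z := 0)) m)"
      unfolding A_def by (rule Lap_matrix[OF wf])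
    also have "\<dots> = A n z * (v(z := 0)) z + (\<Sum>m\<in>?N'. A n m * (v(z := 0)) m)"
      by (rule sum.remove[OF fin z])
    also have "\<dots> = (\<Sum>m\<in>?N'. A n m * v m)"
    proof -
      have "(\<Sum>m\<in>?N'. A n m * (v(z := 0)) m) = (\<Sum>m\<in>?N'. A n m * v m)" by (rule sum.cong) auto
      then show ?thesis by simp
    qed
    finally show ?thesis .
  qed
  have tot: "Lap G X f z = - (\<Sum>n\<in>?N'. Lap G X f n)" for f
    using Lap_total[OF wf, of f] sum.remove[OF fin z, of "Lap G X f"] by simp
  define b where "b n = ind (n = z) - ind (n = y)" for n
  have sb: "(\<Sum>n\<in>?N. b n) = 0" unfolding b_def sum_subtractf
    using sum_ind2[OF fin z, of "\<lambda>_. 1"] sum_ind2[OF fin y, of "\<lambda>_. 1"] by simp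
  have "\<exists>v. \<forall>n\<in>?N'. (\<Sum>m\<in>?N'. A n m * v m) = b n"
  proof (rule fin_inj_surj)
    show "finite ?N'" using fin by simp
    fix v assume h: "\<forall>n\<in>?N'. (\<Sum>m\<in>?N'. A n m * v m) = 0"
    have L0: "Lap G X (v(z := 0)) n = 0" if "n \<in> ?N" for n
    proof (cases "n = z")
      case True
      then show ?thesis using tot[of "v(z := 0)"] key h by simp
    next
      case False then show ?thesis using key h that by simp
    qed
    have "(v(z := 0)) n = 0" if "n \<in> ?N" for n
      by (rule lap_kernel[OF wf L0 z]) (auto simp: that)
    then show "\<forall>m\<in>?N'. v m = 0" by (metis DiffD1 DiffD2 fun_upd_other singletonI)
  qed
  then obtain v where v: "\<forall>n\<in>?N'. (\<Sum>m\<in>?N'. A n m * v m) = b n" by blast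
  have "\<forall>n\<in>?N. Lap G X (v(z := 0)) n = b n"
  proof
    fix n assume n: "n \<in> ?N"
    show "Lap G X (v(z := 0)) n = b n"
    proof (cases "n = z")
      case True
      have "Lap G X (v(z := 0)) z = - (\<Sum>n\<in>?N'. b n)" using tot[of "v(z := 0)"] key v by simp
      also have "\<dots> = b z" using sb sum.remove[OF fin z, of b] by simp
      finally show ?thesis using True by simp
    next
      case False then show ?thesis using key v n by simp
    qed
  qed
  then show ?thesis unfolding b_def by (intro exI[of _ "v(z := 0)"]) simp
qed



definition seg_affine :: "('v,'e,'z) mgraph_scheme \<Rightarrow> ('v,'e) point set \<Rightarrow> (('v,'e) point \<Rightarrow> real) \<Rightarrow> bool" where
  "seg_affine G X f \<longleftrightarrow> (\<forall>e\<in>edges G. \<forall>a\<in>segs G X e. \<forall>u\<in>{a..nx (bp G X e) a}.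
     f (edge_pt G e u) = f (edge_pt G e a) + (u - a) * sl G X f e a)"

lemma sum_ind_filter:
  assumes "finite A"
  shows "(\<Sum>a\<in>A. ind (P a) * g a) = (\<Sum>a\<in>{a\<in>A. P a}. g a)"
  using assms by (simp add: sum.inter_filter) (intro sum.cong, auto simp: ind_def)

lemma rs_affine:
  assumes "a \<le> t" "t < b" "\<And>u. u \<in> {a..b} \<Longrightarrow> \<phi> u = \<alpha> + \<beta> * u"
  shows "right_slope \<phi> t = \<beta>"
proof -
  have d0: "((\<lambda>u. \<alpha> + \<beta> * u) has_real_derivative \<beta>) (at t within {t..b})"
    by (auto intro!: derivative_eq_intros)
  have d: "(\<phi> has_real_derivative \<beta>) (at t within {t..b})"
    by (rule has_field_derivative_transform_within[OF d0, of 1]) (use assms in auto)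
  then have D: "(\<phi> has_real_derivative \<beta>) (at_right t)" using at_within_Icc_at_right[OF assms(2)] by simp
  show ?thesis unfolding right_slope_def
  proof (rule the_equality)
    show "(\<phi> has_real_derivative \<beta>) (at_right t)" by (rule D)
    fix d assume "(\<phi> has_real_derivative d) (at_right t)"
    then show "d = \<beta>" using has_field_derivative_unique[OF _ D] by simp
  qed
qed

lemma ls_affine:
  assumes "a < t" "t \<le> b" "\<And>u. u \<in> {a..b} \<Longrightarrow> \<phi> u = \<alpha> + \<beta> * u"
  shows "left_slope \<phi> t = \<beta>"
proof -
  have d0: "((\<lambda>u. \<alpha> + \<beta> * u) has_real_derivative \<beta>) (at t within {a..t})"
    by (auto intro!: derivative_eq_intros)
  have d: "(\<phi> has_real_derivative \<beta>) (at t within {a..t})"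
    by (rule has_field_derivative_transform_within[OF d0, of 1]) (use assms in auto)
  then have D: "(\<phi> has_real_derivative \<beta>) (at_left t)" using at_within_Icc_at_left[OF assms(1)] by simp
  show ?thesis unfolding left_slope_def
  proof (rule the_equality)
    show "(\<phi> has_real_derivative \<beta>) (at_left t)" by (rule D)
    fix d assume "(\<phi> has_real_derivative d) (at_left t)"
    then show "d = \<beta>" using has_field_derivative_unique[OF _ D] by simp
  qed
qed

lemma seg_lin:
  assumes "seg_affine G X f" "e \<in> edges G" "a \<in> segs G X e" "u \<in> {a..nx (bp G X e) a}"
  shows "f (edge_pt G e u) = (f (edge_pt G e a) - a * sl G X f e a) + sl G X f e a * u"
  using assms unfolding seg_affine_def by (simp add: algebra_simps)

lemma seg_slopes:
  assumes wf: "wfg G X" and sa: "seg_affine G X f" and e: "e \<in> edges G" and a: "a \<in> segs G X e"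
  shows "right_slope (\<lambda>u. f (edge_pt G e u)) a = sl G X f e a"
    "left_slope (\<lambda>u. f (edge_pt G e u)) (nx (bp G X e) a) = sl G X f e a"
  using rs_affine[of a a "nx (bp G X e) a" "\<lambda>u. f (edge_pt G e u)", OF _ _ seg_lin[OF sa e a]]
    ls_affine[of a "nx (bp G X e) a" "nx (bp G X e) a" "\<lambda>u. f (edge_pt G e u)", OF _ _ seg_lin[OF sa e a]]
    seg_props(5)[OF wf e a] by auto

lemma seg_interior:
  assumes wf: "wfg G X" and sa: "seg_affine G X f" and e: "e \<in> edges G"
    and u: "0 < u" "u < len G e" "u \<notin> bp G X e"
  shows "right_slope (\<lambda>u. f (edge_pt G e u)) u = left_slope (\<lambda>u. f (edge_pt G e u)) u"
proof -
  note B = bp_props[OF wf e]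
  let ?a = "sst (bp G X e) (len G e) u"
  note S = sst_props[OF B(1,2,3,4,5), of u]
  have a: "?a \<in> segs G X e" unfolding segs_def using S u by auto
  have au: "?a < u" using S u by (cases "?a = u") auto
  have un: "u < nx (bp G X e) ?a" using S u seg_props(4)[OF wf e a] by (cases "u = nx (bp G X e) ?a") auto
  have "right_slope (\<lambda>u. f (edge_pt G e u)) u = sl G X f e ?a"
    by (rule rs_affine[of ?a u "nx (bp G X e) ?a", OF _ un seg_lin[OF sa e a]]) (use au in simp_all)
  moreover have "left_slope (\<lambda>u. f (edge_pt G e u)) u = sl G X f e ?a"
    by (rule ls_affine[of ?a u "nx (bp G X e) ?a", OF au _ seg_lin[OF sa e a]]) (use un in simp_all)
  ultimately show ?thesis by simp
qed

lemma pt_cases: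
  assumes "0 < len G e" "0 \<le> t" "t \<le> len G e"
  shows "(t = 0 \<and> edge_pt G e t = Vert (fst (ends G e))) \<or> (t = len G e \<and> edge_pt G e t = Vert (snd (ends G e)))
     \<or> (0 < t \<and> t < len G e \<and> edge_pt G e t = Inner e t)"
  using assms unfolding edge_pt_def by auto

lemma flux_node:
  assumes wf: "wfg G X" and sa: "seg_affine G X f" and n: "n \<in> nodes G X"
  shows "flux G f n = Lap G X f n"
  unfolding flux_def Lap_def
proof (rule sum.cong[OF refl])
  fix e assume e: "e \<in> edges G"
  note B = bp_props[OF wf e]
  let ?L = "len G e"
  let ?S = "bp G X e"
  let ?p = "edge_pt G e"
  let ?RS = "right_slope (\<lambda>u. f (edge_pt G e u))"
  let ?LS = "left_slope (\<lambda>u. f (edge_pt G e u))"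
  define T where "T = {t\<in>{0..?L}. ?p t = n}"
  have TS: "T \<subseteq> ?S"
  proof
    fix t assume t: "t \<in> T"
    then have t0: "0 \<le> t" "t \<le> ?L" "?p t = n" unfolding T_def by auto
    from pt_cases[OF B(4) t0(1,2)] show "t \<in> ?S"
    proof (elim disjE)
      assume h: "0 < t \<and> t < ?L \<and> ?p t = Inner e t"
      then have "Inner e t \<in> X" using n t0 unfolding nodes_def by auto
      then show ?thesis unfolding bp_def by auto
    qed (use B in auto)
  qed
  have finT: "finite T" using TS B(1) finite_subset by blast
  have P1: "(\<Sum>t\<in>T. if t < ?L then ?RS t else 0) = (\<Sum>a\<in>segs G X e. ind (?p a = n) * sl G X f e a)"
  proof -
    have "(\<Sum>t\<in>T. if t < ?L then ?RS t else 0) = (\<Sum>t\<in>{a\<in>segs G X e. ?p a = n}. ?RS t)"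
    proof -
      have "(\<Sum>t\<in>T. if t < ?L then ?RS t else 0) = (\<Sum>t\<in>{t\<in>T. t < ?L}. ?RS t)"
        using finT by (simp add: sum.inter_filter)
      also have "{t\<in>T. t < ?L} = {a\<in>segs G X e. ?p a = n}"
        using TS B unfolding T_def segs_def by auto
      finally show ?thesis .
    qed
    also have "\<dots> = (\<Sum>t\<in>{a\<in>segs G X e. ?p a = n}. sl G X f e t)"
      using seg_slopes(1)[OF wf sa e] by (intro sum.cong) auto
    also have "\<dots> = (\<Sum>a\<in>segs G X e. ind (?p a = n) * sl G X f e a)"
      using segs_fin[OF wf e] by (simp add: sum_ind_filter)
    finally show ?thesis .
  qed
  have P2: "(\<Sum>t\<in>T. if 0 < t then ?LS t else 0) = (\<Sum>a\<in>segs G X e. ind (?p (nx ?S a) = n) * sl G X f e a)"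
  proof -
    have "(\<Sum>t\<in>T. if 0 < t then ?LS t else 0) = (\<Sum>t\<in>{t\<in>T. 0 < t}. ?LS t)"
      using finT by (simp add: sum.inter_filter)
    also have "{t\<in>T. 0 < t} = nx ?S ` {a\<in>segs G X e. ?p (nx ?S a) = n}"
    proof
      show "{t\<in>T. 0 < t} \<subseteq> nx ?S ` {a\<in>segs G X e. ?p (nx ?S a) = n}"
      proof
        fix t assume t: "t \<in> {t\<in>T. 0 < t}"
        then have "t \<in> ?S" "0 < t" using TS by auto
        from nx_surj[OF B(1,3,2,5) this] obtain a where "a \<in> ?S" "a < ?L" "nx ?S a = t" by blast
        then show "t \<in> nx ?S ` {a\<in>segs G X e. ?p (nx ?S a) = n}" using t unfolding T_def segs_def by auto
      qed
      show "nx ?S ` {a\<in>segs G X e. ?p (nx ?S a) = n} \<subseteq> {t\<in>T. 0 < t}"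
        using seg_props[OF wf e] unfolding T_def by fastforce
    qed
    also have "(\<Sum>t\<in>nx ?S ` {a\<in>segs G X e. ?p (nx ?S a) = n}. ?LS t) = (\<Sum>a\<in>{a\<in>segs G X e. ?p (nx ?S a) = n}. ?LS (nx ?S a))"
    proof (rule sum.reindex[unfolded comp_def])
      show "inj_on (nx ?S) {a\<in>segs G X e. ?p (nx ?S a) = n}"
        using nx_inj[OF B(1,3)] unfolding segs_def by (rule inj_on_subset) auto
    qed
    also have "\<dots> = (\<Sum>a\<in>{a\<in>segs G X e. ?p (nx ?S a) = n}. sl G X f e a)"
      using seg_slopes(2)[OF wf sa e] by (intro sum.cong) auto
    also have "\<dots> = (\<Sum>a\<in>segs G X e. ind (?p (nx ?S a) = n) * sl G X f e a)"
      using segs_fin[OF wf e] by (simp add: sum_ind_filter)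
    finally show ?thesis .
  qed
  have "(\<Sum>t\<in>T. (if t < ?L then ?RS t else 0) - (if 0 < t then ?LS t else 0))
      = (\<Sum>a\<in>segs G X e. (ind (?p a = n) - ind (?p (nx ?S a) = n)) * sl G X f e a)"
    unfolding sum_subtractf P1 P2 by (simp add: sum_subtractf[symmetric] left_diff_distrib)
  then show "(\<Sum>t\<in>{t \<in> {0..len G e}. edge_pt G e t = n}.
            (if t < len G e then right_slope (\<lambda>u. f (edge_pt G e u)) t else 0) -
            (if 0 < t then left_slope (\<lambda>u. f (edge_pt G e u)) t else 0)) =
         (\<Sum>a\<in>segs G X e. (ind (edge_pt G e a = n) - ind (edge_pt G e (nx (bp G X e) a) = n)) * sl G X f e a)"
    unfolding T_def .
qed



lemma pts_cases:
  assumes "p \<in> pts G"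
  obtains w where "p = Vert w" "w \<in> verts G"
  | e u where "p = Inner e u" "e \<in> edges G" "0 < u" "u < len G e"
  using assms unfolding pts_def by auto

lemma sst_seg:
  assumes wf: "wfg G X" and e: "e \<in> edges G" and u: "0 \<le> u" "u \<le> len G e"
  shows "sst (bp G X e) (len G e) u \<in> segs G X e" "u \<in> {sst (bp G X e) (len G e) u..nx (bp G X e) (sst (bp G X e) (len G e) u)}"
  using sst_props[OF bp_props(1,2,3,4,5)[OF wf e] u] unfolding segs_def by auto

lemma flux_nonnode:
  assumes wf: "wfg G X" and sa: "seg_affine G X f" and p: "p \<in> pts G" "p \<notin> nodes G X"
  shows "flux G f p = 0"
proof -
  obtain e0 u0 where pe: "p = Inner e0 u0" "e0 \<in> edges G" "0 < u0" "u0 < len G e0"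
  proof (cases rule: pts_cases[OF p(1)])
    case (1 w) then show ?thesis using p(2) unfolding nodes_def by auto
  next
    case (2 e u) then show ?thesis using that by blast
  qed
  have nb: "u0 \<notin> bp G X e0" using pe p(2) unfolding bp_def nodes_def by auto
  show ?thesis unfolding flux_def
  proof (rule sum.neutral, rule ballI)
    fix e assume e: "e \<in> edges G"
    note B = bp_props[OF wf e]
    show "(\<Sum>t\<in>{t \<in> {0..len G e}. edge_pt G e t = p}.
            (if t < len G e then right_slope (\<lambda>u. f (edge_pt G e u)) t else 0) -
            (if 0 < t then left_slope (\<lambda>u. f (edge_pt G e u)) t else 0)) = 0"
    proof (cases "e = e0")
      case True
      have "{t \<in> {0..len G e}. edge_pt G e t = p} = {u0}"
      proof
        show "{t \<in> {0..len G e}. edge_pt G e t = p} \<subseteq> {u0}"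
        proof
          fix t assume "t \<in> {t \<in> {0..len G e}. edge_pt G e t = p}"
          then have t: "0 \<le> t" "t \<le> len G e" "edge_pt G e t = p" by auto
          from pt_cases[OF B(4) t(1,2)] show "t \<in> {u0}" using t(3) pe(1) True by auto
        qed
        show "{u0} \<subseteq> {t \<in> {0..len G e}. edge_pt G e t = p}"
          using pe True edge_pt_simps(3)[OF B(4)] by auto
      qed
      then show ?thesis using seg_interior[OF wf sa e, of u0] pe nb True by simp
    next
      case False
      have E: "{t \<in> {0..len G e}. edge_pt G e t = p} = {}"
      proof -
        have "edge_pt G e t \<noteq> p" if "0 \<le> t" "t \<le> len G e" for t
          using pt_cases[OF B(4) that] pe(1) False by auto
        then show ?thesis by force
      qed
      show ?thesis unfolding E by (rule sum.empty)
    qed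
  qed
qed

lemma vs_seg_affine:
  assumes wf: "wfg G X" and vs: "voltage_sol G y z f"
    and X: "\<And>x. x \<in> {y, z} \<Longrightarrow> x \<in> interior_pts G \<Longrightarrow> x \<in> X"
  shows "seg_affine G X f"
  unfolding seg_affine_def
proof (intro ballI)
  fix e a u assume e: "e \<in> edges G" and a: "a \<in> segs G X e" and u: "u \<in> {a..nx (bp G X e) a}"
  note S = seg_props[OF wf e a]
  note B = bp_props[OF wf e]
  have nb: "\<forall>t. a < t \<and> t < nx (bp G X e) a \<longrightarrow> edge_pt G e t \<notin> {y, z}"
  proof (intro allI impI)
    fix t assume t: "a < t \<and> t < nx (bp G X e) a"
    then have t2: "0 < t" "t < len G e" using S by auto
    then have pt: "edge_pt G e t = Inner e t" using edge_pt_simps(3)[OF B(4)] by simp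
    show "edge_pt G e t \<notin> {y, z}"
    proof
      assume "edge_pt G e t \<in> {y, z}"
      moreover have "Inner e t \<in> interior_pts G" using t2 e unfolding interior_pts_def by auto
      ultimately have "Inner e t \<in> X" using X pt by auto
      then have "t \<in> bp G X e" unfolding bp_def by auto
      then show False using S(7)[of t] t by auto
    qed
  qed
  have c: "0 \<le> a \<and> a < nx (bp G X e) a \<and> nx (bp G X e) a \<le> len G e \<and>
     (\<forall>t. a < t \<and> t < nx (bp G X e) a \<longrightarrow> edge_pt G e t \<notin> {y, z})" using S nb by auto
  have pl: "pl_adapted G {y, z} f" using vs unfolding voltage_sol_def by simp
  obtain \<alpha> \<beta> where ab: "\<forall>t\<in>{a..nx (bp G X e) a}. f (edge_pt G e t) = \<alpha> + \<beta> * t"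
    using pl[unfolded pl_adapted_def, rule_format, OF e c] by blast
  have "sl G X f e a = \<beta>" unfolding sl_def using ab S(5)
    by (simp add: field_simps)
  then show "f (edge_pt G e u) = f (edge_pt G e a) + (u - a) * sl G X f e a"
    using ab u S(5) by (simp add: algebra_simps)
qed

definition ext :: "('v,'e,'z) mgraph_scheme \<Rightarrow> ('v,'e) point set \<Rightarrow> (('v,'e) point \<Rightarrow> real) \<Rightarrow> ('v,'e) point \<Rightarrow> real" where
  "ext G X v p = (if p \<in> pts G then (case p of Vert w \<Rightarrow> v p | Inner e u \<Rightarrow>
      v (edge_pt G e (sst (bp G X e) (len G e) u)) + (u - sst (bp G X e) (len G e) u) * sl G X v e (sst (bp G X e) (len G e) u))
     else 0)"

lemma ext_node:
  assumes wf: "wfg G X" and n: "n \<in> nodes G X"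
  shows "ext G X v n = v n"
proof -
  have np: "n \<in> pts G" using nodes_pts[OF wf] n by auto
  show ?thesis
  proof (cases rule: pts_cases[OF np])
    case (1 w) then show ?thesis using np unfolding ext_def by simp
  next
    case (2 e u)
    note B = bp_props[OF wf 2(2)]
    have "n \<in> X" using n 2 unfolding nodes_def by auto
    then have ub: "u \<in> bp G X e" using 2 unfolding bp_def by auto
    have "sst (bp G X e) (len G e) u = u"
      by (rule sst_eq[OF B(1,2,3,4,5) ub]) (use 2 nx_props(2)[OF B(1,3), of u] in auto)
    then show ?thesis using np 2 edge_pt_simps(3)[OF B(4)] unfolding ext_def by simp
  qed
qed

lemma ext_out: "p \<notin> pts G \<Longrightarrow> ext G X v p = 0"
  unfolding ext_def by simp

lemma sl_cong_nodes:
  assumes wf: "wfg G X" and e: "e \<in> edges G" and a: "a \<in> segs G X e"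
    and eq: "\<And>n. n \<in> nodes G X \<Longrightarrow> f n = g n"
  shows "sl G X f e a = sl G X g e a"
  unfolding sl_def using eq pt_bp_node[OF wf e] seg_props[OF wf e a] by simp

lemma ext_seg_affine:
  assumes wf: "wfg G X"
  shows "seg_affine G X (ext G X v)"
  unfolding seg_affine_def
proof (intro ballI)
  fix e a u assume e: "e \<in> edges G" and a: "a \<in> segs G X e" and u: "u \<in> {a..nx (bp G X e) a}"
  note S = seg_props[OF wf e a]
  note B = bp_props[OF wf e]
  have sl: "sl G X (ext G X v) e a = sl G X v e a" by (rule sl_cong_nodes[OF wf e a ext_node[OF wf]])
  have na: "ext G X v (edge_pt G e a) = v (edge_pt G e a)" using ext_node[OF wf pt_bp_node[OF wf e S(1)]] .
  have nb: "ext G X v (edge_pt G e (nx (bp G X e) a)) = v (edge_pt G e (nx (bp G X e) a))"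
    using ext_node[OF wf pt_bp_node[OF wf e S(4)]] .
  consider "u = a" | "u = nx (bp G X e) a" | "a < u \<and> u < nx (bp G X e) a" using u by fastforce
  then show "ext G X v (edge_pt G e u) = ext G X v (edge_pt G e a) + (u - a) * sl G X (ext G X v) e a"
  proof cases
    case 1 then show ?thesis by simp
  next
    case 2
    then show ?thesis unfolding sl using na nb S(5) unfolding sl_def by (simp add: field_simps)
  next
    case 3
    then have u2: "0 < u" "u < len G e" using S by auto
    have pt: "edge_pt G e u = Inner e u" using edge_pt_simps(3)[OF B(4) u2] .
    have inp: "Inner e u \<in> pts G" using e u2 unfolding pts_def by auto
    have "sst (bp G X e) (len G e) u = a" by (rule sst_eq[OF B(1,2,3,4,5) S(1,2)]) (use 3 in auto)
    then show ?thesis unfolding sl na pt using inp unfolding ext_def by simp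
  qed
qed

lemma seg_affine_pl:
  assumes wf: "wfg G X" and sa: "seg_affine G X f" and XB: "X \<subseteq> B"
  shows "pl_adapted G B f"
  unfolding pl_adapted_def
proof (intro ballI allI impI)
  fix e a0 b0 assume e: "e \<in> edges G" and H: "0 \<le> a0 \<and> a0 < b0 \<and> b0 \<le> len G e \<and> (\<forall>t. a0 < t \<and> t < b0 \<longrightarrow> edge_pt G e t \<notin> B)"
  note B = bp_props[OF wf e]
  let ?S = "bp G X e"
  let ?a = "sst ?S (len G e) a0"
  have a0: "0 \<le> a0" "a0 \<le> len G e" using H by auto
  note SS = sst_props[OF B(1,2,3,4,5) a0]
  have a: "?a \<in> segs G X e" using SS unfolding segs_def by auto
  note S = seg_props[OF wf e a]
  have gt: "a0 < nx ?S ?a"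
  proof (rule ccontr)
    assume "\<not> ?thesis"
    then have eq: "nx ?S ?a = a0" using SS by simp
    then have "a0 \<in> ?S" "a0 < len G e" using S H by auto
    then have "a0 \<le> ?a" using SS(5) by simp
    then show False using S(5) eq by simp
  qed
  have le: "b0 \<le> nx ?S ?a"
  proof (rule ccontr)
    assume "\<not> ?thesis"
    then have lt: "nx ?S ?a < b0" by simp
    have i: "0 < nx ?S ?a" "nx ?S ?a < len G e" using lt gt H by auto
    then have "Inner e (nx ?S ?a) \<in> X" using S(4) unfolding bp_def by auto
    then have "edge_pt G e (nx ?S ?a) \<in> B" using edge_pt_simps(3)[OF B(4) i] XB by auto
    then show False using H gt lt by auto
  qed
  show "\<exists>\<alpha> \<beta>. \<forall>t\<in>{a0..b0}. f (edge_pt G e t) = \<alpha> + \<beta> * t"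
  proof (intro exI ballI)
    fix t assume "t \<in> {a0..b0}"
    then have "t \<in> {?a..nx ?S ?a}" using SS(3) le by auto
    from seg_lin[OF sa e a this]
    show "f (edge_pt G e t) = (f (edge_pt G e ?a) - ?a * sl G X f e ?a) + sl G X f e ?a * t" .
  qed
qed

lemma determined:
  assumes wf: "wfg G X" and sf: "seg_affine G X f" and sg: "seg_affine G X g"
    and eq: "\<And>n. n \<in> nodes G X \<Longrightarrow> f n = g n"
    and out: "\<And>p. p \<notin> pts G \<Longrightarrow> f p = 0 \<and> g p = 0"
  shows "f = g"
proof
  fix p show "f p = g p"
  proof (cases "p \<in> pts G")
    case False then show ?thesis using out by simp
  next
    case True
    then show ?thesis
    proof (cases rule: pts_cases)
      case (1 w) then show ?thesis using eq unfolding nodes_def by simp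
    next
      case (2 e u)
      note B = bp_props[OF wf 2(2)]
      let ?a = "sst (bp G X e) (len G e) u"
      have a: "?a \<in> segs G X e" "u \<in> {?a..nx (bp G X e) ?a}" using sst_seg[OF wf 2(2)] 2 by auto
      have pt: "edge_pt G e u = p" using edge_pt_simps(3)[OF B(4)] 2 by simp
      have "f (edge_pt G e u) = f (edge_pt G e ?a) + (u - ?a) * sl G X f e ?a"
        using sf a 2(2) unfolding seg_affine_def by blast
      also have "\<dots> = g (edge_pt G e ?a) + (u - ?a) * sl G X g e ?a"
        using eq[OF pt_bp_node[OF wf 2(2) seg_props(1)[OF wf 2(2) a(1)]]]
          sl_cong_nodes[OF wf 2(2) a(1) eq] by simp
      also have "\<dots> = g (edge_pt G e u)"
        using sg a 2(2) unfolding seg_affine_def by (metis (no_types, lifting))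
      finally have "f (edge_pt G e u) = g (edge_pt G e u)" .
      then show ?thesis using pt by simp
    qed
  qed
qed



definition sol :: "('v,'e,'z) mgraph_scheme \<Rightarrow> ('v,'e) point \<Rightarrow> ('v,'e) point \<Rightarrow> ('v,'e) point \<Rightarrow> real" where
  "sol G y z = (THE f. voltage_sol G y z f)"

lemma jv_sol: "jv G z x y = sol G y z x" unfolding jv_def sol_def ..
lemma res_sol: "res G x y = sol G x y x" unfolding res_def jv_sol ..

lemma node_of_pt:
  assumes "p \<in> pts G" "p \<in> interior_pts G \<Longrightarrow> p \<in> X"
  shows "p \<in> nodes G X"
proof (cases rule: pts_cases[OF assms(1)])
  case (1 w) then show ?thesis unfolding nodes_def by auto
next
  case (2 e u)
  then have "p \<in> interior_pts G" unfolding interior_pts_def by auto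
  then show ?thesis using assms(2) unfolding nodes_def by auto
qed

lemma flux_sol:
  assumes wf: "wfg G X" and vs: "voltage_sol G y z f" and yz: "y \<in> pts G" "z \<in> pts G"
    and X: "\<And>x. x \<in> {y, z} \<Longrightarrow> x \<in> interior_pts G \<Longrightarrow> x \<in> X"
  shows "\<And>n. n \<in> nodes G X \<Longrightarrow> Lap G X f n = ind (n = z) - ind (n = y)" "f z = 0"
    "seg_affine G X f"
proof -
  show sa: "seg_affine G X f" by (rule vs_seg_affine[OF wf vs X])
  fix n assume n: "n \<in> nodes G X"
  have "Lap G X f n = flux G f n" using flux_node[OF wf sa n] by simp
  also have "\<dots> = ind (n = z) - ind (n = y)" using vs nodes_pts[OF wf] n unfolding voltage_sol_def ind_def by auto
  finally show "Lap G X f n = ind (n = z) - ind (n = y)" .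
next
  show "f z = 0" using vs unfolding voltage_sol_def by simp
qed

lemma sol_eu:
  assumes mg: "metrized_graph G" and y: "y \<in> pts G" and z: "z \<in> pts G"
  shows "\<exists>!f. voltage_sol G y z f"
proof -
  define X where "X = {x\<in>{y, z}. x \<in> interior_pts G}"
  have wf: "wfg G X" using mg unfolding wfg_def X_def by auto
  have XX: "\<And>x. x \<in> {y, z} \<Longrightarrow> x \<in> interior_pts G \<Longrightarrow> x \<in> X" unfolding X_def by auto
  have yn: "y \<in> nodes G X" by (rule node_of_pt[OF y]) (use XX in auto)
  have zn: "z \<in> nodes G X" by (rule node_of_pt[OF z]) (use XX in auto)
  obtain v where v: "\<forall>n\<in>nodes G X. Lap G X v n = ind (n = z) - ind (n = y)" "v z = 0"
    using lap_exists[OF wf yn zn] by blast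
  let ?f = "ext G X v"
  have sa: "seg_affine G X ?f" by (rule ext_seg_affine[OF wf])
  have "voltage_sol G y z ?f"
    unfolding voltage_sol_def
  proof (intro conjI ballI allI impI)
    show "pl_adapted G {y, z} ?f" by (rule seg_affine_pl[OF wf sa]) (auto simp: X_def)
    fix p assume p: "p \<in> pts G"
    show "flux G ?f p = (if p = z then 1 else 0) - (if p = y then 1 else 0)"
    proof (cases "p \<in> nodes G X")
      case True
      have "flux G ?f p = Lap G X ?f p" by (rule flux_node[OF wf sa True])
      also have "\<dots> = Lap G X v p" by (rule Lap_cong[OF wf ext_node[OF wf]])
      finally show ?thesis using v True unfolding ind_def by simp
    next
      case False
      then have "p \<noteq> y" "p \<noteq> z" using yn zn by auto
      then show ?thesis using flux_nonnode[OF wf sa p False] by simp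
    qed
  next
    show "?f z = 0" using ext_node[OF wf zn] v by simp
  next
    fix p :: "('a, 'b) point" assume "p \<notin> pts G" then show "?f p = 0" by (rule ext_out)
  qed
  moreover have "f1 = f2" if f1: "voltage_sol G y z f1" and f2: "voltage_sol G y z f2" for f1 f2
  proof -
    have F1: "\<And>n. n \<in> nodes G X \<Longrightarrow> Lap G X f1 n = ind (n = z) - ind (n = y)" "f1 z = 0" "seg_affine G X f1"
      using flux_sol[OF wf f1 y z] XX by auto
    have F2: "\<And>n. n \<in> nodes G X \<Longrightarrow> Lap G X f2 n = ind (n = z) - ind (n = y)" "f2 z = 0" "seg_affine G X f2"
      using flux_sol[OF wf f2 y z] XX by auto
    let ?d = "\<lambda>x. 1 * f1 x + (-1) * f2 x + 0"
    have "Lap G X ?d n = 0" if "n \<in> nodes G X" for n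
      using Lap_lin[of G X 1 f1 "-1" f2 0 n] F1(1)[OF that] F2(1)[OF that] by simp
    from lap_kernel[OF wf this zn]
    have "\<And>n. n \<in> nodes G X \<Longrightarrow> f1 n = f2 n" using F1(2) F2(2) by simp
    then show "f1 = f2" by (rule determined[OF wf F1(3) F2(3)]) (use f1 f2 in \<open>auto simp: voltage_sol_def\<close>)
  qed
  ultimately show ?thesis by blast
qed

lemma sol_lap:
  assumes mg: "metrized_graph G" and wf: "wfg G X" and y: "y \<in> pts G" and z: "z \<in> pts G"
    and X: "\<And>x. x \<in> {y, z} \<Longrightarrow> x \<in> interior_pts G \<Longrightarrow> x \<in> X"
  shows "\<And>n. n \<in> nodes G X \<Longrightarrow> Lap G X (sol G y z) n = ind (n = z) - ind (n = y)" "sol G y z z = 0"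
proof -
  have vs: "voltage_sol G y z (sol G y z)" unfolding sol_def by (rule theI'[OF sol_eu[OF mg y z]])
  note F = flux_sol[OF wf vs y z X]
  show "\<And>n. n \<in> nodes G X \<Longrightarrow> Lap G X (sol G y z) n = ind (n = z) - ind (n = y)" by (rule F(1))
  show "sol G y z z = 0" by (rule F(2))
qed



lemma sum_lap_ind:
  assumes "finite N" "a \<in> N" "b \<in> N" "\<And>n. n \<in> N \<Longrightarrow> L n = ind (n = b) - ind (n = a)"
  shows "(\<Sum>n\<in>N. w n * L n) = w b - w a"
proof -
  have "(\<Sum>n\<in>N. w n * L n) = (\<Sum>n\<in>N. w n * ind (b = n)) - (\<Sum>n\<in>N. w n * ind (a = n))"
    using assms(4) by (simp add: sum_subtractf[symmetric] right_diff_distrib eq_commute)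
  then show ?thesis using sum_ind[OF assms(1,2)] sum_ind[OF assms(1,3)] by simp
qed

lemma recip:
  assumes wf: "wfg G X" and abcd: "a \<in> nodes G X" "b \<in> nodes G X" "c \<in> nodes G X" "d \<in> nodes G X"
    and f1: "\<And>n. n \<in> nodes G X \<Longrightarrow> Lap G X f1 n = ind (n = b) - ind (n = a)"
    and f2: "\<And>n. n \<in> nodes G X \<Longrightarrow> Lap G X f2 n = ind (n = d) - ind (n = c)"
  shows "f2 b - f2 a = f1 d - f1 c"
proof -
  have fin: "finite (nodes G X)" using wf_basic[OF wf] by simp
  have "f2 b - f2 a = - energy G X f1 f2"
    using sum_lap_ind[OF fin abcd(1,2) f1, of f2] green[OF wf, of f2 f1] by simp
  moreover have "f1 d - f1 c = - energy G X f2 f1"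
    using sum_lap_ind[OF fin abcd(3,4) f2, of f1] green[OF wf, of f1 f2] by simp
  ultimately show ?thesis using energy_sym[of G X f1 f2] by simp
qed

lemma lap_uniq:
  assumes wf: "wfg G X" and eq: "\<And>n. n \<in> nodes G X \<Longrightarrow> Lap G X f n = Lap G X g n"
    and z: "z \<in> nodes G X" "f z = g z"
  shows "\<And>n. n \<in> nodes G X \<Longrightarrow> f n = g n"
proof -
  let ?d = "\<lambda>x. 1 * f x + (-1) * g x + 0"
  have "Lap G X ?d n = 0" if "n \<in> nodes G X" for n
    using Lap_lin[of G X 1 f "-1" g 0 n] eq[OF that] by simp
  from lap_kernel[OF wf this z(1)] z(2)
  show "\<And>n. n \<in> nodes G X \<Longrightarrow> f n = g n" by simp
qed

lemma del_simps:
  "edges (delete_edge G e) = edges G - {e}" "verts (delete_edge G e) = verts G"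
  "ends (delete_edge G e) = ends G" "len (delete_edge G e) = len G"
  "edge_pt (delete_edge G e) = edge_pt G"
  unfolding delete_edge_def by (auto simp: edge_pt_def fun_eq_iff)

lemma del_bp: "bp (delete_edge G e) X = bp G X" unfolding bp_def del_simps ..
lemma del_segs: "segs (delete_edge G e) X = segs G X" unfolding segs_def del_bp del_simps ..
lemma del_sl: "sl (delete_edge G e) X = sl G X" unfolding sl_def[abs_def] del_bp del_simps ..
lemma del_nodes: "nodes (delete_edge G e) X = nodes G X" unfolding nodes_def del_simps ..

lemma Lap_split:
  assumes wf: "wfg G X" and e: "e \<in> edges G" and nX: "\<And>u. Inner e u \<notin> X"
  shows "Lap G X f n = Lap (delete_edge G e) X f n
     + (ind (Vert (fst (ends G e)) = n) - ind (Vert (snd (ends G e)) = n))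
       * ((f (Vert (snd (ends G e))) - f (Vert (fst (ends G e)))) / len G e)"
proof -
  note B = bp_props[OF wf e]
  have bpe: "bp G X e = {0, len G e}" unfolding bp_def using nX by auto
  have segs: "segs G X e = {0}" unfolding segs_def bpe using B(4) by auto
  have "{c\<in>{0, len G e}. 0 < c} = {len G e}" using B(4) by auto
  then have nx0: "nx (bp G X e) 0 = len G e" unfolding bpe nx_def by simp
  have fin: "finite (edges G)" using wf_basic[OF wf] by simp
  have "Lap G X f n = (\<Sum>e'\<in>edges G - {e}. \<Sum>a\<in>segs G X e'.
      (ind (edge_pt G e' a = n) - ind (edge_pt G e' (nx (bp G X e') a) = n)) * sl G X f e' a)
    + (\<Sum>a\<in>segs G X e. (ind (edge_pt G e a = n) - ind (edge_pt G e (nx (bp G X e) a) = n)) * sl G X f e a)"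
    unfolding Lap_def using sum.remove[OF fin e] by (simp add: add.commute)
  also have "(\<Sum>e'\<in>edges G - {e}. \<Sum>a\<in>segs G X e'.
      (ind (edge_pt G e' a = n) - ind (edge_pt G e' (nx (bp G X e') a) = n)) * sl G X f e' a)
     = Lap (delete_edge G e) X f n"
    unfolding Lap_def del_simps del_bp del_segs del_sl ..
  also have "(\<Sum>a\<in>segs G X e. (ind (edge_pt G e a = n) - ind (edge_pt G e (nx (bp G X e) a) = n)) * sl G X f e a)
     = (ind (Vert (fst (ends G e)) = n) - ind (Vert (snd (ends G e)) = n))
       * ((f (Vert (snd (ends G e))) - f (Vert (fst (ends G e)))) / len G e)"
    unfolding segs sl_def using edge_pt_simps[OF B(4)] nx0 by simp
  finally show ?thesis .
qed

lemma del_metrized: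
  assumes "metrized_graph G" "e \<in> edges G" "\<not> is_bridge G e"
  shows "metrized_graph (delete_edge G e)"
  using assms unfolding metrized_graph_def is_bridge_def del_simps by auto

lemma pts_del: "pts (delete_edge G e) \<subseteq> pts G"
  unfolding pts_def del_simps by auto

lemma interior_del:
  assumes "p \<in> pts (delete_edge G e)" "p \<in> interior_pts G"
  shows "p \<in> interior_pts (delete_edge G e)"
  using assms unfolding pts_def interior_pts_def del_simps by auto

theorem theorem3p1:
  fixes G :: "('v, 'e) mgraph" and e :: 'e and s t :: "('v, 'e) point"
  assumes "metrized_graph G"
    and "e \<in> edges G"
    and "\<not> is_bridge G e"
    and "s \<in> pts (delete_edge G e)" and "t \<in> pts (delete_edge G e)"
  shows "res G s t = res (delete_edge G e) s t
           - 1 / (len G e + res (delete_edge G e) (Vert (fst (ends G e))) (Vert (snd (ends G e))))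
             * (jv (delete_edge G e) (Vert (fst (ends G e))) (Vert (snd (ends G e))) s
                - jv (delete_edge G e) (Vert (fst (ends G e))) (Vert (snd (ends G e))) t)\<^sup>2
       \<and> res G s t = res (delete_edge G e) s t
           - (len G e + res (delete_edge G e) (Vert (fst (ends G e))) (Vert (snd (ends G e)))) / (len G e)\<^sup>2
             * (jv G (Vert (fst (ends G e))) (Vert (snd (ends G e))) s
                - jv G (Vert (fst (ends G e))) (Vert (snd (ends G e))) t)\<^sup>2
       \<and> res G s t \<le> res (delete_edge G e) s t
       \<and> (res (delete_edge G e) s t = res G s t \<longleftrightarrow>
            jv G (Vert (fst (ends G e))) (Vert (snd (ends G e))) s
            = jv G (Vert (fst (ends G e))) (Vert (snd (ends G e))) t)"
proof -
  note mg = assms(1) and e = assms(2)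
  define G' where "G' = delete_edge G e"
  have mg': "metrized_graph G'" unfolding G'_def by (rule del_metrized[OF assms(1-3)])
  define P :: "('v,'e) point" where "P = Vert (fst (ends G e))"
  define Q :: "('v,'e) point" where "Q = Vert (snd (ends G e))"
  define L where "L = len G e"
  define X where "X = {x\<in>{s, t}. x \<in> interior_pts G'}"
  have s': "s \<in> pts G'" and t': "t \<in> pts G'" using assms(4,5) unfolding G'_def by auto
  have s: "s \<in> pts G" using s' pts_del[of G e] unfolding G'_def by blast
  have t: "t \<in> pts G" using t' pts_del[of G e] unfolding G'_def by blast
  have L0: "0 < L" using mg e unfolding metrized_graph_def L_def by auto
  have PQv: "fst (ends G e) \<in> verts G" "snd (ends G e) \<in> verts G" using mg e unfolding metrized_graph_def by auto
  have wf': "wfg G' X" using mg' unfolding wfg_def X_def by auto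
  have intsub: "interior_pts G' \<subseteq> interior_pts G" unfolding G'_def interior_pts_def del_simps by auto
  have wf: "wfg G X" using mg wf' intsub unfolding wfg_def by auto
  have nodes_eq: "nodes G' X = nodes G X" unfolding G'_def del_nodes ..
  have nX: "Inner e u \<notin> X" for u
    unfolding X_def G'_def interior_pts_def del_simps by auto
  have Lsplit: "Lap G X f n = Lap G' X f n + (ind (P = n) - ind (Q = n)) * ((f Q - f P) / L)" for f n
    using Lap_split[OF wf e nX] unfolding G'_def P_def Q_def L_def .
  let ?N = "nodes G X"
  have Pn: "P \<in> ?N" and Qn: "Q \<in> ?N" using PQv unfolding nodes_def P_def Q_def by auto
  have P': "P \<in> pts G'" and Q': "Q \<in> pts G'" using PQv unfolding P_def Q_def pts_def G'_def del_simps by auto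
  have P: "P \<in> pts G" using P' pts_del[of G e] unfolding G'_def by blast
  have Q: "Q \<in> pts G" using Q' pts_del[of G e] unfolding G'_def by blast
  have PQi: "P \<notin> interior_pts H" "Q \<notin> interior_pts H" for H :: "('v,'e) mgraph"
    unfolding P_def Q_def interior_pts_def by auto
  have sX: "s \<in> interior_pts G \<Longrightarrow> s \<in> X" "s \<in> interior_pts G' \<Longrightarrow> s \<in> X"
    using interior_del[of s G e] assms(4) unfolding X_def G'_def by auto
  have tX: "t \<in> interior_pts G \<Longrightarrow> t \<in> X" "t \<in> interior_pts G' \<Longrightarrow> t \<in> X"
    using interior_del[of t G e] assms(5) unfolding X_def G'_def by auto
  have sn: "s \<in> ?N" using node_of_pt[OF s] sX by blast
  have tn: "t \<in> ?N" using node_of_pt[OF t] tX by blast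
  have SL': "\<And>n. n \<in> ?N \<Longrightarrow> Lap G' X (sol G' y z) n = ind (n = z) - ind (n = y)" "sol G' y z z = 0"
    if "y \<in> {s, t, P, Q}" "z \<in> {s, t, P, Q}" for y z
  proof -
    have yz: "y \<in> pts G'" "z \<in> pts G'" using that s' t' P' Q' by auto
    have XX: "\<And>x. x \<in> {y, z} \<Longrightarrow> x \<in> interior_pts G' \<Longrightarrow> x \<in> X" using that sX tX PQi by auto
    show "\<And>n. n \<in> ?N \<Longrightarrow> Lap G' X (sol G' y z) n = ind (n = z) - ind (n = y)" "sol G' y z z = 0"
      using sol_lap[OF mg' wf' yz XX] nodes_eq by auto
  qed
  have SL: "\<And>n. n \<in> ?N \<Longrightarrow> Lap G X (sol G y z) n = ind (n = z) - ind (n = y)" "sol G y z z = 0"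
    if "y \<in> {s, t, P, Q}" "z \<in> {s, t, P, Q}" for y z
  proof -
    have yz: "y \<in> pts G" "z \<in> pts G" using that s t P Q by auto
    have XX: "\<And>x. x \<in> {y, z} \<Longrightarrow> x \<in> interior_pts G \<Longrightarrow> x \<in> X" using that sX tX PQi by auto
    show "\<And>n. n \<in> ?N \<Longrightarrow> Lap G X (sol G y z) n = ind (n = z) - ind (n = y)" "sol G y z z = 0"
      using sol_lap[OF mg wf yz XX] by auto
  qed
  have wf'N: "wfg G' X" by (rule wf')
  note recip' = recip[OF wf', unfolded nodes_eq]
  note recipG = recip[OF wf]
  define g where "g = sol G' s t"
  define h where "h = sol G' Q P"
  define kp where "kp = sol G' P Q"
  define R where "R = kp P"
  note g = SL'[of s t, folded g_def, simplified]
  note h = SL'[of Q P, folded h_def, simplified]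
  note kp = SL'[of P Q, folded kp_def, simplified]
  have RhQ: "R = h Q"
    using recip'[OF Pn Qn Qn Pn kp(1) h(1)] h(2) kp(2) unfolding R_def by simp
  have R0: "0 \<le> R"
  proof -
    have fin: "finite ?N" using wf_basic[OF wf] by simp
    have "kp Q - kp P = - energy G' X kp kp"
      using sum_lap_ind[OF fin Pn Qn kp(1), of kp] green[OF wf', of kp kp] nodes_eq by simp
    then show ?thesis using energy_nonneg[OF wf', of kp] kp(2) unfolding R_def by simp
  qed
  have LR: "0 < L + R" using L0 R0 by simp
  have ghrel: "h t - h s = g P - g Q"
    using recip'[OF sn tn Qn Pn g(1) h(1)] .
  have kx: "sol G' x P Q = h x" if "x \<in> {s, t}" for x
  proof -
    have xn: "x \<in> ?N" using that sn tn by auto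
    have xin: "x \<in> {s, t, P, Q}" "P \<in> {s, t, P, Q}" using that by auto
    note k = SL'[of x P, OF xin]
    have "h P - h x = sol G' x P P - sol G' x P Q"
      using recip'[OF xn Pn Qn Pn k(1) h(1)] that by simp
    then show ?thesis using h(2) k(2) that by simp
  qed
  define I where "I = (g P - g Q) / (L + R)"
  define W where "W = (\<lambda>x. 1 * g x + I * h x + (- I * h t))"
  have hP: "h P = 0" using h(2) .
  have WQP: "(W Q - W P) / L = - I"
  proof -
    have "W Q - W P = g Q - g P + I * R" unfolding W_def using RhQ hP by (simp add: algebra_simps)
    also have "\<dots> = - I * L" unfolding I_def using LR by (simp add: field_simps)
    finally show ?thesis using L0 by simp
  qed
  have LW: "Lap G X W n = ind (n = t) - ind (n = s)" if "n \<in> ?N" for n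
  proof -
    have "Lap G X W n = Lap G' X W n + (ind (P = n) - ind (Q = n)) * ((W Q - W P) / L)" by (rule Lsplit)
    also have "Lap G' X W n = 1 * Lap G' X g n + I * Lap G' X h n" unfolding W_def by (rule Lap_lin)
    also have "\<dots> = (ind (n = t) - ind (n = s)) + I * (ind (n = P) - ind (n = Q))"
      using g(1)[OF that] h(1)[OF that] by simp
    finally show ?thesis unfolding WQP by (simp add: eq_commute algebra_simps)
  qed
  define F where "F = sol G s t"
  note F = SL[of s t, folded F_def, simplified]
  have FW: "F n = W n" if "n \<in> ?N" for n
    by (rule lap_uniq[OF wf _ tn _ that]) (use F LW g(2) in \<open>auto simp: W_def\<close>)
  have resG: "res G s t = g s + I * (h s - h t)"
    using FW[OF sn] unfolding res_sol F_def[symmetric] W_def by (simp add: algebra_simps)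
  have resG': "res G' s t = g s" unfolding res_sol g_def ..
  define c where "c = L / (L + R)"
  define Hc where "Hc = (\<lambda>x. c * h x + 0 * h x + 0)"
  have LHc: "Lap G X Hc n = ind (n = P) - ind (n = Q)" if "n \<in> ?N" for n
  proof -
    have "Lap G X Hc n = Lap G' X Hc n + (ind (P = n) - ind (Q = n)) * ((Hc Q - Hc P) / L)" by (rule Lsplit)
    also have "Lap G' X Hc n = c * Lap G' X h n + 0 * Lap G' X h n" unfolding Hc_def by (rule Lap_lin)
    also have "(Hc Q - Hc P) / L = c * R / L" unfolding Hc_def using RhQ hP by simp
    finally have e1: "Lap G X Hc n = c * Lap G' X h n + 0 * Lap G' X h n + (ind (P = n) - ind (Q = n)) * (c * R / L)" .
    have e2: "ind (P = n) = ind (n = P)" "ind (Q = n) = ind (n = Q)" by (auto simp: eq_commute)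
    have "Lap G X Hc n = (ind (n = P) - ind (n = Q)) * (c + c * R / L)"
      unfolding e1 e2 h(1)[OF that] by (simp add: algebra_simps)
    moreover have "c + c * R / L = 1"
    proof -
      have "c + c * R / L = c * ((L + R) / L)" using L0 by (simp add: field_simps)
      also have "\<dots> = 1" unfolding c_def using L0 LR by simp
      finally show ?thesis .
    qed
    ultimately show ?thesis by simp
  qed
  define H where "H = sol G Q P"
  note H = SL[of Q P, folded H_def, simplified]
  have HHc: "H n = Hc n" if "n \<in> ?N" for n
    by (rule lap_uniq[OF wf _ Pn _ that]) (use H LHc hP in \<open>auto simp: Hc_def\<close>)
  have mx: "sol G x P Q = c * h x" if "x \<in> {s, t}" for x
  proof -
    have xn: "x \<in> ?N" using that sn tn by auto
    have xin: "x \<in> {s, t, P, Q}" "P \<in> {s, t, P, Q}" using that by auto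
    note m = SL[of x P, OF xin]
    have "H P - H x = sol G x P P - sol G x P Q"
      using recipG[OF xn Pn Qn Pn m(1) H(1)] that by simp
    then show ?thesis using H(2) m(2) that HHc[OF xn] unfolding Hc_def by simp
  qed
  have jv1: "jv G' P Q s - jv G' P Q t = h s - h t" unfolding jv_sol using kx by simp
  have jv2: "jv G P Q s - jv G P Q t = c * (h s - h t)" unfolding jv_sol using mx by (simp add: algebra_simps)
  have Rdef: "res G' P Q = R" unfolding res_sol R_def kp_def ..
  define A where "A = h s - h t"
  have I2: "I = - A / (L + R)" unfolding I_def A_def using ghrel by (simp add: field_simps)
  have main: "res G s t = res G' s t - A\<^sup>2 / (L + R)"
  proof -
    have "I * A = - (A\<^sup>2 / (L + R))" unfolding I2 power2_eq_square by simp
    then show ?thesis unfolding resG resG' A_def[symmetric] by simp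
  qed
  have c1: "res G s t = res G' s t - 1 / (L + res G' P Q) * (jv G' P Q s - jv G' P Q t)\<^sup>2"
    unfolding main Rdef jv1 A_def by simp
  have c2: "res G s t = res G' s t - (L + res G' P Q) / L\<^sup>2 * (jv G P Q s - jv G P Q t)\<^sup>2"
  proof -
    have "(L + R) / L\<^sup>2 * (c * A)\<^sup>2 = A\<^sup>2 / (L + R)"
      unfolding c_def using L0 LR by (simp add: power2_eq_square)
    then show ?thesis unfolding main Rdef jv2 A_def by simp
  qed
  have nn: "0 \<le> A\<^sup>2 / (L + R)" using LR by simp
  have c3: "res G s t \<le> res G' s t" using main nn by simp
  have c4: "(res G' s t = res G s t) \<longleftrightarrow> (jv G P Q s = jv G P Q t)"
  proof -
    have "(res G' s t = res G s t) \<longleftrightarrow> A = 0" using main LR by simp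
    also have "\<dots> \<longleftrightarrow> c * A = 0" using L0 LR unfolding c_def by simp
    also have "\<dots> \<longleftrightarrow> (jv G P Q s = jv G P Q t)"
    proof -
      have "c * A = jv G P Q s - jv G P Q t" using jv2 unfolding A_def by simp
      then show ?thesis by simp
    qed
    finally show ?thesis .
  qed
  show ?thesis using c1 c2 c3 c4 unfolding G'_def P_def Q_def L_def by blast
qed


end
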